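(* Let $\mathcal C$ be an $\mathbb F_{q^n}$-linear rank metric code of dimension $k>2$ contained in $\mathcal L_{n,q}$, with $\mathcal C\cap\mathcal U_1=\{0\}$. Suppose there exists an integer $s$ with $\gcd(s,n)=1$ such that: (1) $\dim(\mathcal C\cap\mathcal C^{[s]})=k-2$ and $\dim(\mathcal C\cap\mathcal C^{[s]}\cap\mathcal C^{[2s]})=k-3$; that is, there exist $p(x),q(x)\in\mathcal L_{n,q}$, with $q(x)\in\mathcal C$, such that \[\mathcal C=\langle p(x)^{[s]},p(x)^{[2s]},\ldots,p(x)^{[s(k-1)]}\rangle_{\mathbb F_{q^n}}\oplus\langle q(x)\rangle_{\mathbb F_{q^n}};\] (2) $p(x)$ is invertible and there exists $\eta\in\mathbb F_{q^n}^*$ such that $p(x)+\eta\,p(x)^{[sk]}\in\mathcal C$ and $\mathrm N_{q^n/q}(\eta)\neq(-1)^{kn}$. Then $\mathcal C$ is an MRD code equivalent to $\mathcal H_{k,s}(\eta)$.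
   Context: $q$ is a prime power, $[i]:=q^i$. $\mathcal L_{n,q}$ is the $\mathbb F_{q^n}$-vector space of linearized polynomials $f(x)=\sum_{i=0}^{n-1}a_ix^{[i]}$, $a_i\in\mathbb F_{q^n}$, identified with $\mathbb F_q$-linear maps of $\mathbb F_{q^n}$ (rank = $\mathbb F_q$-dimension of the image). $\mathcal U_1$ is the set of elements of rank at most one. For $f(x)=\sum_i a_ix^{[i]}$, $f(x)^{[j]}:=x^{[j]}\circ f(x)=\sum_i a_i^{[j]}x^{[(i+j)\bmod n]}$, and $\mathcal C^{[j]}=\{f^{[j]}\colon f\in\mathcal C\}$. A code (an $\mathbb F_q$-subspace of $\mathcal L_{n,q}$ with rank distance $\mathrm{rk}(f-g)$, minimum distance $d$) is MRD if $|\mathcal C|=q^{n(n-d+1)}$. $\mathrm N_{q^n/q}(\eta)=\prod_{i=0}^{n-1}\eta^{[i]}$. $\mathcal H_{k,s}(\eta)=\langle x+\eta x^{[sk]},x^{[s]},\ldots,x^{[s(k-1)]}\rangle_{\mathbb F_{q^n}}$. Codes $\mathcal C,\mathcal C'$ are equivalent if there are invertible $h,g\in\mathcal L_{n,q}$ and a field automorphism $\sigma$ (acting on coefficients) with $\{h\circ f^\sigma\circ g\colon f\in\mathcal C\}=\mathcal C'$. *)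

theory Defs
  imports Complex_Main "HOL-Library.Function_Algebras" "HOL-Computational_Algebra.Primes"
begin

text \<open>The field F_{q^n} is a finite field type 'a with CARD('a) = q^n.
  Linearized polynomials are identified with the F_q-linear maps 'a => 'a
  (as in the paper), so that the code space L_{n,q} is a set of functions.\<close>

definition prime_power :: "nat \<Rightarrow> bool" where
  "prime_power q \<longleftrightarrow> (\<exists>p r. prime p \<and> r > 0 \<and> q = p ^ r)"

definition Fq :: "nat \<Rightarrow> 'a::field set" where
  "Fq q = {x. x ^ q = x}"

definition Lnq :: "nat \<Rightarrow> ('a::field \<Rightarrow> 'a) set" where
  "Lnq q = {f. (\<forall>x y. f (x + y) = f x + f y) \<and> (\<forall>c\<in>Fq q. \<forall>x. f (c * x) = c * f x)}"

definition scl :: "'a::field \<Rightarrow> ('a \<Rightarrow> 'a) \<Rightarrow> ('a \<Rightarrow> 'a)" where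
  "scl c f = (\<lambda>x. c * f x)"

abbreviation span_L :: "('a::field \<Rightarrow> 'a) set \<Rightarrow> ('a \<Rightarrow> 'a) set" where
  "span_L S \<equiv> module.span scl S"

abbreviation dim_L :: "('a::field \<Rightarrow> 'a) set \<Rightarrow> nat" where
  "dim_L S \<equiv> vector_space.dim scl S"

text \<open>x^{[j]} for an integer j (indices taken mod n, as q^n-th power is the identity).\<close>
definition xq :: "nat \<Rightarrow> nat \<Rightarrow> int \<Rightarrow> 'a::field \<Rightarrow> 'a" where
  "xq q n j = (\<lambda>x. x ^ (q ^ nat (j mod int n)))"

definition twist :: "nat \<Rightarrow> nat \<Rightarrow> int \<Rightarrow> ('a::field \<Rightarrow> 'a) \<Rightarrow> ('a \<Rightarrow> 'a)" where
  "twist q n j f = xq q n j \<circ> f"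

definition twist_code :: "nat \<Rightarrow> nat \<Rightarrow> int \<Rightarrow> ('a::field \<Rightarrow> 'a) set \<Rightarrow> ('a \<Rightarrow> 'a) set" where
  "twist_code q n j C = twist q n j ` C"

definition Fq_span :: "nat \<Rightarrow> 'a::field set \<Rightarrow> 'a set" where
  "Fq_span q B = {(\<Sum>b\<in>B. c b * b) | c. \<forall>b\<in>B. c b \<in> Fq q}"

definition Fq_dim :: "nat \<Rightarrow> 'a::field set \<Rightarrow> nat" where
  "Fq_dim q S = (LEAST r. \<exists>B. finite B \<and> card B = r \<and> B \<subseteq> S \<and> Fq_span q B = S)"

definition rk :: "nat \<Rightarrow> ('a::field \<Rightarrow> 'a) \<Rightarrow> nat" where
  "rk q f = Fq_dim q (range f)"

definition U1 :: "nat \<Rightarrow> ('a::field \<Rightarrow> 'a) set" where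
  "U1 q = {f \<in> Lnq q. rk q f \<le> 1}"

definition min_dist :: "nat \<Rightarrow> ('a::field \<Rightarrow> 'a) set \<Rightarrow> nat" where
  "min_dist q C = Min {rk q (f - g) | f g. f \<in> C \<and> g \<in> C \<and> f \<noteq> g}"

definition MRD :: "nat \<Rightarrow> nat \<Rightarrow> ('a::field \<Rightarrow> 'a) set \<Rightarrow> bool" where
  "MRD q n C \<longleftrightarrow> card C = q ^ (n * (n - min_dist q C + 1))"

definition normq :: "nat \<Rightarrow> nat \<Rightarrow> 'a::field \<Rightarrow> 'a" where
  "normq q n \<eta> = (\<Prod>i<n. \<eta> ^ (q ^ i))"

definition field_aut :: "('a::field \<Rightarrow> 'a) \<Rightarrow> bool" where
  "field_aut \<sigma> \<longleftrightarrow> bij \<sigma> \<and> (\<forall>x y. \<sigma> (x + y) = \<sigma> x + \<sigma> y) \<and> (\<forall>x y. \<sigma> (x * y) = \<sigma> x * \<sigma> y)"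

text \<open>f^sigma (sigma applied to the coefficients of f): as a map, x \<mapsto> sigma(f(sigma^{-1} x)).\<close>
definition coeff_aut :: "('a \<Rightarrow> 'a) \<Rightarrow> ('a \<Rightarrow> 'a) \<Rightarrow> ('a \<Rightarrow> 'a)" where
  "coeff_aut \<sigma> f = \<sigma> \<circ> f \<circ> inv \<sigma>"

definition equivalent_codes :: "nat \<Rightarrow> ('a::field \<Rightarrow> 'a) set \<Rightarrow> ('a \<Rightarrow> 'a) set \<Rightarrow> bool" where
  "equivalent_codes q C C' \<longleftrightarrow>
     (\<exists>h g \<sigma>. h \<in> Lnq q \<and> bij h \<and> g \<in> Lnq q \<and> bij g \<and> field_aut \<sigma> \<and>
        (\<lambda>f. h \<circ> coeff_aut \<sigma> f \<circ> g) ` C = C')"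

definition H_code :: "nat \<Rightarrow> nat \<Rightarrow> nat \<Rightarrow> int \<Rightarrow> 'a::field \<Rightarrow> ('a \<Rightarrow> 'a) set" where
  "H_code q n k s \<eta> = span_L (insert (\<lambda>x. x + \<eta> * xq q n (s * int k) x)
                                {xq q n (s * int i) | i. 1 \<le> i \<and> i \<le> k - 1})"

end

theory Submission
  imports Defs "HOL-Computational_Algebra.Polynomial" "HOL-Library.FuncSet"
begin

lemma ff_power_card:
  fixes x :: "'a::{field,finite}"
  shows "x ^ card (UNIV :: 'a set) = x"
proof (cases "x = 0")
  case False
  have "x * (\<Prod>y\<in>UNIV-{0}. x * y) = x * x ^ (card (UNIV :: 'a set) - 1) * \<Prod>(UNIV-{0})"
    by (simp add: prod.distrib mult_ac)
  also have "x * x ^ (card (UNIV :: 'a set) - 1) = x ^ Suc (card (UNIV :: 'a set) - 1)"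
    by (subst power_Suc) auto
  also have "Suc (card (UNIV :: 'a set) - 1) = card (UNIV :: 'a set)"
    using finite_UNIV_card_ge_0[where ?'a = 'a] by simp
  also have "(\<Prod>y\<in>UNIV-{0}. x * y) = (\<Prod>y\<in>UNIV-{0}. y)"
    by (rule prod.reindex_bij_witness[of _ "\<lambda>y. y / x" "\<lambda>y. x * y"]) (use False in auto)
  finally show ?thesis
    by simp
qed (use finite_UNIV_card_ge_0[where ?'a = 'a] in auto)

lemma ff_CHAR_prime: "prime CHAR('a::{field,finite})"
  by (simp add: finite_imp_CHAR_pos prime_CHAR_semidom)

lemma of_nat_inj_CHAR:
  assumes "i < CHAR('a::{field,finite})" "j < CHAR('a)" "(of_nat i :: 'a) = of_nat j"
  shows "i = j"
proof (rule ccontr)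
  assume ne: "i \<noteq> j"
  { fix a b :: nat assume ab: "a < b" "b < CHAR('a)" "(of_nat a :: 'a) = of_nat b"
    have "(of_nat (b - a) :: 'a) = 0" using ab by (simp add: of_nat_diff)
    hence "CHAR('a) dvd (b - a)" by (simp add: of_nat_eq_0_iff_char_dvd)
    moreover have "0 < b - a" "b - a < CHAR('a)" using ab by auto
    ultimately have False using nat_dvd_not_less by blast }
  with assms ne show False by (metis linorder_neqE_nat)
qed

lemma ff_CHAR_dvd_card: "CHAR('a::{field,finite}) dvd card (UNIV :: 'a set)"
proof -
  define l where "l = CHAR('a)"
  have lpos: "l > 0" unfolding l_def by (simp add: finite_imp_CHAR_pos)
  have ofl: "(of_nat l :: 'a) = 0" unfolding l_def by simp
  define r where "r = {(x::'a, y). \<exists>m. y = x + of_nat m}"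
  have neg: "\<exists>m'. (- of_nat m :: 'a) = of_nat m'" for m
  proof -
    have "(of_nat (m * (l - 1)) :: 'a) + of_nat m = of_nat (m * l)"
      using lpos by (simp add: algebra_simps of_nat_diff flip: of_nat_add)
    also have "\<dots> = 0" using ofl by simp
    finally have "(of_nat (m * (l - 1)) :: 'a) + of_nat m = 0" .
    hence "- of_nat m = (of_nat (m * (l - 1)) :: 'a)" by (metis neg_eq_iff_add_eq_0 add.commute)
    thus ?thesis by blast
  qed
  have R1: "(x, x) \<in> r" for x by (auto simp: r_def intro: exI[of _ 0])
  have R2: "(y, x) \<in> r" if xy: "(x, y) \<in> r" for x y
  proof -
    obtain m where "y = x + of_nat m" using xy unfolding r_def by blast
    moreover obtain m' where "(- of_nat m :: 'a) = of_nat m'" using neg by blast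
    ultimately have "x = y + of_nat m'" by (metis add_diff_cancel_right' diff_conv_add_uminus)
    thus ?thesis by (auto simp: r_def)
  qed
  have R3: "(x, z) \<in> r" if xy: "(x, y) \<in> r" "(y, z) \<in> r" for x y z
  proof -
    obtain m m' where "y = x + of_nat m" "z = y + of_nat m'" using xy unfolding r_def by blast
    hence "z = x + of_nat (m + m')" by (simp add: algebra_simps)
    thus ?thesis unfolding r_def by blast
  qed
  have eq: "equiv UNIV r"
  proof (rule equivI)
    show "refl_on UNIV r" by (rule refl_onI) (auto intro: R1)
    show "r \<subseteq> UNIV \<times> UNIV" by simp
    show "sym r" by (rule symI) (rule R2)
    show "trans r" by (rule transI) (rule R3)
  qed
  have "l dvd card X" if X: "X \<in> UNIV // r" for X
  proof -
    obtain x where X': "X = r `` {x}" using X by (auto simp: quotient_def)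
    have "X = (\<lambda>i. x + of_nat i) ` {..<l}"
    proof (intro equalityI subsetI)
      fix y assume "y \<in> X"
      then obtain m where m: "y = x + of_nat m" using X' by (auto simp: r_def)
      have "(of_nat m :: 'a) = of_nat (m mod l)"
      proof -
        have "(of_nat m :: 'a) = of_nat (m mod l + l * (m div l))" by simp
        also have "\<dots> = of_nat (m mod l)" using ofl by (simp only: of_nat_add of_nat_mult) simp
        finally show ?thesis .
      qed
      then show "y \<in> (\<lambda>i. x + of_nat i) ` {..<l}" using m lpos by auto
    next
      fix y assume "y \<in> (\<lambda>i. x + of_nat i) ` {..<l}"
      then show "y \<in> X" using X' by (auto simp: r_def)
    qed
    moreover have "inj_on (\<lambda>i. x + (of_nat i :: 'a)) {..<l}"
      by (auto simp: inj_on_def l_def intro: of_nat_inj_CHAR)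
    ultimately have "card X = l" by (simp add: card_image)
    then show ?thesis by simp
  qed
  then show ?thesis using equiv_imp_dvd_card[OF finite_UNIV eq] l_def by blast
qed



lemma rank_nullity_card:
  fixes f :: "'a::{ab_group_add,finite} \<Rightarrow> 'b::ab_group_add"
  assumes add: "\<And>x y. f (x + y) = f x + f y"
  shows "card (range f) * card {x. f x = 0} = card (UNIV :: 'a set)"
proof -
  interpret additive f by standard (rule add)
  have fib: "card (f -` {y}) = card {x. f x = 0}" if yr: "y \<in> range f" for y
  proof -
    obtain x0 where y: "y = f x0" using yr by auto
    have "f -` {y} = (\<lambda>z. z + x0) ` {x. f x = 0}"
    proof (intro equalityI subsetI)
      fix x assume "x \<in> f -` {y}"
      hence "f (x - x0) = 0" using y by (simp add: diff)
      thus "x \<in> (\<lambda>z. z + x0) ` {x. f x = 0}" by (intro image_eqI[of _ _ "x - x0"]) auto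
    next
      fix x assume "x \<in> (\<lambda>z. z + x0) ` {x. f x = 0}"
      thus "x \<in> f -` {y}" using y by (auto simp: add)
    qed
    moreover have "inj_on (\<lambda>z. z + x0) {x. f x = 0}" by (auto simp: inj_on_def)
    ultimately show ?thesis by (simp add: card_image)
  qed
  have "UNIV = (\<Union>y\<in>range f. f -` {y})" by auto
  hence "card (UNIV :: 'a set) = card (\<Union>y\<in>range f. f -` {y})" by simp
  also have "\<dots> = (\<Sum>y\<in>range f. card (f -` {y}))"
    by (rule card_UN_disjoint) auto
  also have "\<dots> = (\<Sum>y\<in>range f. card {x. f x = 0})" using fib by simp
  finally show ?thesis by simp
qed

context
  fixes q n :: nat
  assumes qpp: "prime_power q" and npos: "n > 0"
    and cardq: "card (UNIV :: 'a::{field,finite} set) = q ^ n"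
begin

lemma q_ge2: "q \<ge> 2"
proof -
  obtain P r where "prime P" "r > 0" "q = P ^ r" using qpp unfolding prime_power_def by blast
  moreover have "P \<ge> 2" using \<open>prime P\<close> prime_ge_2_nat by blast
  ultimately show ?thesis using self_le_power[of P r] by simp
qed

lemma q_CHAR: "\<exists>r. q = CHAR('a) ^ r"
proof -
  obtain P r where P: "prime P" "r > 0" "q = P ^ r" using qpp unfolding prime_power_def by blast
  have "CHAR('a) dvd P ^ (r * n)" using ff_CHAR_dvd_card[where 'a='a] cardq P by (simp add: power_mult)
  hence "CHAR('a) dvd P" using ff_CHAR_prime[where 'a='a] prime_dvd_power by blast
  hence "CHAR('a) = P" using ff_CHAR_prime[where 'a='a] P(1) primes_dvd_imp_eq by blast
  thus ?thesis using P by blast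
qed

lemma frob_add: "((x::'a) + y) ^ (q ^ j) = x ^ (q ^ j) + y ^ (q ^ j)"
proof -
  obtain r where r: "q = CHAR('a) ^ r" using q_CHAR by blast
  show ?thesis by (rule freshmans_dream'[where n="r * j"]) (auto simp: ff_CHAR_prime r power_mult)
qed

lemma frob_sum: "(sum (f :: 'b \<Rightarrow> 'a) A) ^ (q ^ j) = (\<Sum>i\<in>A. f i ^ (q ^ j))"
proof -
  obtain r where r: "q = CHAR('a) ^ r" using q_CHAR by blast
  show ?thesis by (rule freshmans_dream_sum'[where n="r * j"]) (auto simp: ff_CHAR_prime r power_mult)
qed

lemma frob_neg: "(- (x::'a)) ^ (q ^ j) = - (x ^ (q ^ j))"
proof -
  have "0 = (x + - x) ^ (q ^ j)" using q_ge2 by simp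
  also have "\<dots> = x ^ (q ^ j) + (- x) ^ (q ^ j)" by (rule frob_add)
  finally show ?thesis by (simp add: eq_neg_iff_add_eq_0 add.commute)
qed

lemma frob_diff: "((x::'a) - y) ^ (q ^ j) = x ^ (q ^ j) - y ^ (q ^ j)"
  using frob_add[of x "-y" j] frob_neg[of y j] by simp

lemma frob_n: "(x::'a) ^ (q ^ n) = x"
  using ff_power_card[of x] cardq by simp

lemma frob_nm: "(x::'a) ^ (q ^ (n * m)) = x"
proof (induction m)
  case (Suc m)
  have "x ^ (q ^ (n * Suc m)) = (x ^ (q ^ (n * m))) ^ (q ^ n)"
    by (simp add: power_add power_mult[symmetric] mult.commute)
  thus ?case using Suc frob_n by simp
qed simp

lemma frob_mod: "(x::'a) ^ (q ^ m) = x ^ (q ^ (m mod n))"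
proof -
  have "m = n * (m div n) + m mod n" by simp
  hence "x ^ (q ^ m) = (x ^ (q ^ (n * (m div n)))) ^ (q ^ (m mod n))"
    by (metis power_add power_mult)
  thus ?thesis by (simp add: frob_nm)
qed

lemma frob_iter: "(x::'a) ^ (q ^ j) = x \<Longrightarrow> x ^ (q ^ (j * m)) = x"
proof (induction m)
  case (Suc m)
  have "x ^ (q ^ (j * Suc m)) = (x ^ (q ^ (j * m))) ^ (q ^ j)"
    by (simp add: power_add power_mult[symmetric] mult.commute)
  thus ?case using Suc by simp
qed simp

lemma frob_fix:
  assumes "coprime t n" "(x::'a) ^ (q ^ t) = x"
  shows "x ^ q = x"
proof (cases "t = 0")
  case True
  hence "n = 1" using assms(1) by simp
  thus ?thesis using frob_n[of x] by simp
next
  case False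
  obtain u v where uv: "t * u = n * v + gcd t n" using bezout_nat[OF False] by blast
  hence uv': "t * u = n * v + 1" using assms(1) by simp
  have "x = x ^ (q ^ (t * u))" using frob_iter[OF assms(2)] by simp
  also have "\<dots> = x ^ (q ^ (n * v) * q)" by (simp only: uv' power_add power_one_right)
  also have "\<dots> = (x ^ (q ^ (n * v))) ^ q" by (simp only: power_mult)
  also have "\<dots> = x ^ q" by (simp add: frob_nm)
  finally show ?thesis by simp
qed

lemma Fq_card_le: "card (Fq q :: 'a set) \<le> q"
proof -
  define pp :: "'a poly" where "pp = monom 1 q + [:0, -1:]"
  have dq: "degree pp = q" unfolding pp_def
    using q_ge2 by (subst degree_add_eq_left) (auto simp: degree_monom_eq)
  hence "pp \<noteq> 0" using q_ge2 by auto
  moreover have "{x. poly pp x = 0} = Fq q"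
    by (auto simp: pp_def Fq_def poly_monom)
  ultimately show ?thesis using card_poly_roots_bound[of pp] dq by simp
qed

lemma Fq_card_ge: "card (Fq q :: 'a set) \<ge> q"
proof -
  define T :: "'a \<Rightarrow> 'a" where "T x = (\<Sum>i<n. x ^ (q ^ i))" for x
  define pp :: "'a poly" where "pp = (\<Sum>i<n. monom 1 (q ^ i))"
  have Tadd: "T (x + y) = T x + T y" for x y
    by (simp add: T_def frob_add sum.distrib)
  have Tq: "T x ^ q = T x" for x
  proof -
    have "T x ^ q = T x ^ (q ^ 1)" by simp
    also have "\<dots> = (\<Sum>i<n. (x ^ (q ^ i)) ^ (q ^ 1))" unfolding T_def by (rule frob_sum)
    also have "\<dots> = (\<Sum>i<n. x ^ (q ^ Suc i))" by (simp add: power_mult[symmetric] mult.commute)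
    also have "\<dots> = T x"
    proof -
      obtain n' where n': "n = Suc n'" using npos by (cases n) auto
      have "(\<Sum>i<n. x ^ (q ^ Suc i)) + x ^ (q ^ 0) = (\<Sum>i<Suc n. x ^ (q ^ i))"
        by (subst sum.lessThan_Suc_shift) simp
      also have "\<dots> = T x + x ^ (q ^ n)" by (simp add: T_def)
      finally show ?thesis using frob_n[of x] by simp
    qed
    finally show ?thesis .
  qed
  have inj: "q ^ i = q ^ j \<Longrightarrow> i = j" for i j using q_ge2 by (simp add: power_inject_exp)
  have "coeff pp (q ^ (n - 1)) = 1"
  proof -
    have "coeff pp (q ^ (n - 1)) = (\<Sum>i<n. if q ^ i = q ^ (n - 1) then 1 else 0)"
      by (simp add: pp_def coeff_sum)
    also have "\<dots> = (\<Sum>i\<in>{n - 1}. 1)"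
      by (rule sum.mono_neutral_cong_right) (use npos inj in auto)
    finally show ?thesis by simp
  qed
  hence ppnz: "pp \<noteq> 0" by auto
  have "degree pp \<le> q ^ (n - 1)" unfolding pp_def
    by (rule degree_sum_le) (use q_ge2 in \<open>auto simp: degree_monom_eq intro!: power_increasing\<close>)
  moreover have "{x. poly pp x = 0} = {x. T x = 0}"
    by (simp add: pp_def T_def poly_sum poly_monom)
  ultimately have kerT: "card {x. T x = 0} \<le> q ^ (n - 1)"
    using card_poly_roots_bound[OF ppnz] by simp
  have rn: "card (range T) * card {x. T x = 0} = q ^ n"
    using rank_nullity_card[of T] Tadd cardq by simp
  have "range T \<subseteq> Fq q" using Tq by (auto simp: Fq_def)
  hence "card (range T) \<le> card (Fq q :: 'a set)" by (simp add: card_mono)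
  moreover have "card (range T) \<ge> q"
  proof (rule ccontr)
    assume "\<not> card (range T) \<ge> q"
    hence "card (range T) \<le> q - 1" by simp
    hence "card (range T) * card {x. T x = 0} \<le> (q - 1) * q ^ (n - 1)"
      using kerT by (intro mult_mono) auto
    also have "\<dots> < q * q ^ (n - 1)" using q_ge2 by simp
    also have "\<dots> = q ^ n" using npos by (cases n) auto
    finally show False using rn by simp
  qed
  ultimately show ?thesis by simp
qed

lemma Fq_card: "card (Fq q :: 'a set) = q"
  using Fq_card_le Fq_card_ge by (simp add: antisym)

end



definition FqSub :: "nat \<Rightarrow> 'a::field set \<Rightarrow> bool" where
  "FqSub q S \<longleftrightarrow> 0 \<in> S \<and> (\<forall>x\<in>S. \<forall>y\<in>S. x + y \<in> S) \<and> (\<forall>c\<in>Fq q. \<forall>x\<in>S. c * x \<in> S)"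

definition Fq_indep :: "nat \<Rightarrow> 'a::field set \<Rightarrow> bool" where
  "Fq_indep q B \<longleftrightarrow> (\<forall>c. (\<forall>b\<in>B. c b \<in> Fq q) \<and> (\<Sum>b\<in>B. c b * b) = 0 \<longrightarrow> (\<forall>b\<in>B. c b = 0))"

lemma FqSub_sum:
  assumes "FqSub q S" "finite A" "\<And>i. i \<in> A \<Longrightarrow> f i \<in> S"
  shows "sum f A \<in> S"
  using assms(2,3) by (induction A rule: finite_induct) (use assms(1) in \<open>auto simp: FqSub_def\<close>)

lemma span_sub:
  assumes "FqSub q S" "B \<subseteq> S" "finite B"
  shows "Fq_span q B \<subseteq> S"
proof
  fix x assume "x \<in> Fq_span q B"
  then obtain c where x: "x = (\<Sum>b\<in>B. c b * b)" and c: "\<forall>b\<in>B. c b \<in> Fq q"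
    unfolding Fq_span_def by blast
  show "x \<in> S" unfolding x
    by (rule FqSub_sum[OF assms(1,3)]) (use assms c in \<open>auto simp: FqSub_def\<close>)
qed

context
  fixes q n :: nat
  assumes qpp: "prime_power q" and npos: "n > 0"
    and cardq: "card (UNIV :: 'a::{field,finite} set) = q ^ n"
begin

lemma Fq_add: "x \<in> Fq q \<Longrightarrow> y \<in> Fq q \<Longrightarrow> (x::'a) + y \<in> Fq q"
  using frob_add[OF qpp npos cardq, of x y 1] by (simp add: Fq_def)
lemma Fq_neg: "x \<in> Fq q \<Longrightarrow> - (x::'a) \<in> Fq q"
  using frob_neg[OF qpp npos cardq, of x 1] by (simp add: Fq_def)
lemma Fq_mult: "x \<in> Fq q \<Longrightarrow> y \<in> Fq q \<Longrightarrow> (x::'a) * y \<in> Fq q"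
  by (simp add: Fq_def power_mult_distrib)
lemma Fq_div: "x \<in> Fq q \<Longrightarrow> y \<in> Fq q \<Longrightarrow> (x::'a) / y \<in> Fq q"
  by (simp add: Fq_def power_divide)
lemma Fq_diff: "x \<in> Fq q \<Longrightarrow> y \<in> Fq q \<Longrightarrow> (x::'a) - y \<in> Fq q"
  using Fq_add Fq_neg by (metis diff_conv_add_uminus)
lemma Fq_0: "(0::'a) \<in> Fq q"
  using q_ge2[OF qpp npos cardq] by (simp add: Fq_def)
lemma Fq_1: "(1::'a) \<in> Fq q"
  by (simp add: Fq_def)

lemma span_super:
  assumes "finite (B :: 'a set)"
  shows "B \<subseteq> Fq_span q B"
proof
  fix x assume x: "x \<in> B"
  have "(\<Sum>b\<in>B. (if b = x then 1 else 0) * b) = (\<Sum>b\<in>B. if b = x then b else 0)"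
    by (intro sum.cong) auto
  also have "\<dots> = x" using x assms by (simp add: sum.delta)
  finally have "(\<Sum>b\<in>B. (if b = x then 1 else 0) * b) = x" .
  moreover have "\<forall>b\<in>B. (if b = x then 1 else 0) \<in> (Fq q :: 'a set)"
    by (auto simp: Fq_0 Fq_1)
  ultimately show "x \<in> Fq_span q B" unfolding Fq_span_def
    by (auto intro!: exI[of _ "\<lambda>b. if b = x then 1 else 0"])
qed

lemma span_FqSub:
  assumes "finite (B :: 'a set)"
  shows "FqSub q (Fq_span q B)"
  unfolding FqSub_def
proof (intro conjI ballI)
  show "0 \<in> Fq_span q B" unfolding Fq_span_def
    by (rule CollectI, rule exI[of _ "\<lambda>_. 0"]) (auto simp: Fq_0)
next
  fix x y assume "x \<in> Fq_span q B" "y \<in> Fq_span q B"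
  then obtain c d where "x = (\<Sum>b\<in>B. c b * b)" "\<forall>b\<in>B. c b \<in> Fq q"
    "y = (\<Sum>b\<in>B. d b * b)" "\<forall>b\<in>B. d b \<in> Fq q" unfolding Fq_span_def by blast
  then show "x + y \<in> Fq_span q B" unfolding Fq_span_def
    by (intro CollectI exI[of _ "\<lambda>b. c b + d b"]) (auto simp: Fq_add sum.distrib algebra_simps)
next
  fix a :: 'a and x assume a: "a \<in> Fq q" and "x \<in> Fq_span q B"
  then obtain c where "x = (\<Sum>b\<in>B. c b * b)" "\<forall>b\<in>B. c b \<in> Fq q" unfolding Fq_span_def by blast
  then show "a * x \<in> Fq_span q B" unfolding Fq_span_def using a
    by (intro CollectI exI[of _ "\<lambda>b. a * c b"]) (auto simp: Fq_mult sum_distrib_left mult.assoc)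
qed

lemma span_card_le:
  assumes "finite (B :: 'a set)"
  shows "card (Fq_span q B) \<le> q ^ card B"
proof -
  have "Fq_span q B \<subseteq> (\<lambda>c. \<Sum>b\<in>B. c b * b) ` (PiE B (\<lambda>_. Fq q))"
  proof
    fix x assume "x \<in> Fq_span q B"
    then obtain c where x: "x = (\<Sum>b\<in>B. c b * b)" and c: "\<forall>b\<in>B. c b \<in> Fq q"
      unfolding Fq_span_def by blast
    show "x \<in> (\<lambda>c. \<Sum>b\<in>B. c b * b) ` (PiE B (\<lambda>_. Fq q))"
      by (rule image_eqI[of _ _ "restrict c B"]) (use c x in \<open>auto intro!: sum.cong simp: PiE_iff\<close>)
  qed
  hence "card (Fq_span q B) \<le> card ((\<lambda>c. \<Sum>b\<in>B. c b * b) ` (PiE B (\<lambda>_. Fq q)))"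
    by (intro card_mono) (auto intro: finite_PiE assms)
  also have "\<dots> \<le> card (PiE B (\<lambda>_. Fq q :: 'a set))" by (rule card_image_le) (auto intro: finite_PiE assms)
  also have "\<dots> = q ^ card B" using assms by (simp add: card_PiE Fq_card[OF qpp npos cardq])
  finally show ?thesis .
qed

lemma indep_card:
  assumes "finite (B :: 'a set)" "Fq_indep q B"
  shows "card (Fq_span q B) = q ^ card B"
proof -
  have eq: "Fq_span q B = (\<lambda>c. \<Sum>b\<in>B. c b * b) ` (PiE B (\<lambda>_. Fq q))"
  proof (intro equalityI subsetI)
    fix x assume "x \<in> Fq_span q B"
    then obtain c where x: "x = (\<Sum>b\<in>B. c b * b)" and c: "\<forall>b\<in>B. c b \<in> Fq q"
      unfolding Fq_span_def by blast
    show "x \<in> (\<lambda>c. \<Sum>b\<in>B. c b * b) ` (PiE B (\<lambda>_. Fq q))"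
      by (rule image_eqI[of _ _ "restrict c B"]) (use c x in \<open>auto intro!: sum.cong simp: PiE_iff\<close>)
  next
    fix x assume "x \<in> (\<lambda>c. \<Sum>b\<in>B. c b * b) ` (PiE B (\<lambda>_. Fq q))"
    thus "x \<in> Fq_span q B" unfolding Fq_span_def by (auto simp: PiE_iff)
  qed
  have inj: "inj_on (\<lambda>c. \<Sum>b\<in>B. c b * b) (PiE B (\<lambda>_. Fq q))"
  proof (rule inj_onI)
    fix c d assume c: "c \<in> PiE B (\<lambda>_. Fq q)" and d: "d \<in> PiE B (\<lambda>_. Fq q)"
      and cd: "(\<Sum>b\<in>B. c b * b) = (\<Sum>b\<in>B. d b * b)"
    have "(\<Sum>b\<in>B. (c b - d b) * b) = 0" using cd by (simp add: algebra_simps sum_subtractf)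
    moreover have "\<forall>b\<in>B. c b - d b \<in> Fq q" using c d by (auto simp: Fq_diff PiE_iff)
    moreover have H: "\<And>c'. (\<forall>b\<in>B. c' b \<in> Fq q) \<Longrightarrow> (\<Sum>b\<in>B. c' b * b) = 0 \<Longrightarrow> \<forall>b\<in>B. c' b = 0"
      using assms(2) unfolding Fq_indep_def by blast
    ultimately have "\<forall>b\<in>B. c b - d b = 0"
      using H[of "\<lambda>b. c b - d b"] by simp
    thus "c = d" using c d by (intro PiE_ext) auto
  qed
  show ?thesis unfolding eq using assms
    by (simp add: card_image[OF inj] card_PiE Fq_card[OF qpp npos cardq])
qed

lemma solve_lemma:
  assumes "finite (B :: 'a set)" "\<forall>b\<in>B. c b \<in> Fq q" "c b0 \<in> Fq q" "c b0 \<noteq> 0"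
    "c b0 * b0 + (\<Sum>b\<in>B. c b * b) = 0"
  shows "b0 \<in> Fq_span q B"
proof -
  have "b0 = (- 1 / c b0) * (\<Sum>b\<in>B. c b * b)"
    using assms(4,5) by (simp add: field_simps eq_neg_iff_add_eq_0)
  also have "\<dots> = (\<Sum>b\<in>B. (- c b / c b0) * b)" by (simp add: sum_distrib_left)
  finally have "b0 = (\<Sum>b\<in>B. (- c b / c b0) * b)" .
  moreover have "\<forall>b\<in>B. - c b / c b0 \<in> Fq q" using assms(2,3) by (simp add: Fq_div Fq_neg)
  ultimately show ?thesis unfolding Fq_span_def by (auto intro!: exI[of _ "\<lambda>b. - c b / c b0"])
qed

lemma sub_card:
  assumes S: "FqSub q (S :: 'a set)"
  shows "card S = q ^ Fq_dim q S"
proof -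
  define Pr where "Pr r \<longleftrightarrow> (\<exists>B. finite B \<and> card B = r \<and> B \<subseteq> S \<and> Fq_span q B = S)" for r
  have fS: "finite S" by simp
  have "Pr (card S)" unfolding Pr_def
    by (intro exI[of _ S]) (use span_sub[OF S subset_refl fS] span_super[OF fS] in auto)
  hence "Pr (Fq_dim q S)" unfolding Fq_dim_def Pr_def by (rule LeastI)
  then obtain B0 where B0: "finite B0" "card B0 = Fq_dim q S" "B0 \<subseteq> S" "Fq_span q B0 = S"
    unfolding Pr_def by blast
  have minim: "\<not> Pr r" if "r < Fq_dim q S" for r
    using not_less_Least[OF that[unfolded Fq_dim_def]] unfolding Pr_def by blast
  have "Fq_indep q B0"
  proof (rule ccontr)
    assume "\<not> Fq_indep q B0"
    then obtain c b0 where c: "\<forall>b\<in>B0. c b \<in> Fq q" "(\<Sum>b\<in>B0. c b * b) = 0" "b0 \<in> B0" "c b0 \<noteq> 0"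
      unfolding Fq_indep_def by blast
    define B' where "B' = B0 - {b0}"
    have "c b0 * b0 + (\<Sum>b\<in>B'. c b * b) = 0"
      using c B0(1) unfolding B'_def by (simp add: sum.remove)
    hence b0: "b0 \<in> Fq_span q B'"
      by (intro solve_lemma) (use c B0(1) in \<open>auto simp: B'_def\<close>)
    have fB': "finite B'" using B0(1) by (simp add: B'_def)
    have "B0 \<subseteq> Fq_span q B'" using span_super[OF fB'] b0 by (auto simp: B'_def)
    hence "S \<subseteq> Fq_span q B'" using span_sub[OF span_FqSub[OF fB'] _ B0(1)] B0(4) by blast
    moreover have "Fq_span q B' \<subseteq> S" using span_sub[OF S _ fB'] B0(3) by (auto simp: B'_def)
    ultimately have "Pr (card B')" unfolding Pr_def using fB' B0(3) by (auto simp: B'_def)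
    moreover have "card B' < card B0" using B0(1) c(3) unfolding B'_def by (rule card_Diff1_less)
    ultimately show False using minim B0(2) by auto
  qed
  thus ?thesis using indep_card[OF B0(1)] B0 by simp
qed

lemma exists_indep:
  "m \<le> n \<Longrightarrow> \<exists>B :: 'a set. finite B \<and> card B = m \<and> Fq_indep q B"
proof (induction m)
  case 0
  show ?case by (intro exI[of _ "{}"]) (auto simp: Fq_indep_def)
next
  case (Suc m)
  then obtain B :: "'a set" where B: "finite B" "card B = m" "Fq_indep q B" by auto
  have "card (Fq_span q B) < card (UNIV :: 'a set)"
    using indep_card[OF B(1,3)] B(2) Suc(2) cardq q_ge2[OF qpp npos cardq] by (simp add: power_strict_increasing_iff)
  hence "Fq_span q B \<noteq> UNIV" by auto
  then obtain x where x: "x \<notin> Fq_span q B" by blast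
  have xB: "x \<notin> B" using x span_super[OF B(1)] by blast
  have "Fq_indep q (insert x B)" unfolding Fq_indep_def
  proof (intro allI impI ballI)
    fix c b assume c: "(\<forall>b\<in>insert x B. c b \<in> Fq q) \<and> (\<Sum>b\<in>insert x B. c b * b) = 0"
      and b: "b \<in> insert x B"
    have s: "c x * x + (\<Sum>b\<in>B. c b * b) = 0" using c B(1) xB by simp
    have cx: "c x = 0"
    proof (rule ccontr)
      assume "c x \<noteq> 0"
      hence "x \<in> Fq_span q B" using c s by (intro solve_lemma[OF B(1)]) auto
      thus False using x by simp
    qed
    hence "\<forall>b\<in>B. c b = 0" using s c B(3) unfolding Fq_indep_def by auto
    thus "c b = 0" using cx b by auto
  qed
  thus ?case using B xB by (intro exI[of _ "insert x B"]) auto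
qed

lemma Lnq_vanish:
  assumes h: "h \<in> Lnq q" and B: "finite B" "\<forall>b\<in>B. h b = (0::'a)" and x: "x \<in> Fq_span q B"
  shows "h x = 0"
proof -
  interpret additive h by standard (use h in \<open>simp add: Lnq_def\<close>)
  obtain c where x: "x = (\<Sum>b\<in>B. c b * b)" and c: "\<forall>b\<in>B. c b \<in> Fq q"
    using x unfolding Fq_span_def by blast
  have "h x = (\<Sum>b\<in>B. h (c b * b))" unfolding x by (rule sum)
  also have "\<dots> = (\<Sum>b\<in>B. c b * h b)" using h c by (intro sum.cong) (auto simp: Lnq_def)
  also have "\<dots> = 0" using B by simp
  finally show ?thesis .
qed

lemma Lnq_range_sub:
  assumes h: "h \<in> Lnq q"
  shows "FqSub q (range (h :: 'a \<Rightarrow> 'a))"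
proof -
  interpret additive h by standard (use h in \<open>simp add: Lnq_def\<close>)
  have "0 \<in> range h" using zero by (metis rangeI)
  moreover have "u + v \<in> range h" if uv: "u \<in> range h" "v \<in> range h" for u v
  proof -
    obtain a b where "u = h a" "v = h b" using uv by blast
    hence "u + v = h (a + b)" by (simp add: add)
    thus ?thesis by simp
  qed
  moreover have "c * u \<in> range h" if cu: "c \<in> Fq q" "u \<in> range h" for c u
  proof -
    obtain a where "u = h a" using cu by blast
    hence "c * u = h (c * a)" using h cu(1) by (simp add: Lnq_def)
    thus ?thesis by simp
  qed
  ultimately show ?thesis unfolding FqSub_def by blast
qed

lemma Lnq_ker_sub:
  assumes h: "h \<in> Lnq q"
  shows "FqSub q {x. (h :: 'a \<Rightarrow> 'a) x = 0}"
proof -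
  interpret additive h by standard (use h in \<open>simp add: Lnq_def\<close>)
  show ?thesis unfolding FqSub_def using h zero by (auto simp: Lnq_def add)
qed

lemma Lnq_rank_nullity:
  assumes h: "h \<in> Lnq q"
  shows "card (range (h :: 'a \<Rightarrow> 'a)) * card {x. h x = 0} = q ^ n"
  using rank_nullity_card[of h] h cardq by (simp add: Lnq_def)

lemma Lnq_card_range:
  assumes h: "h \<in> Lnq q"
  shows "card (range (h :: 'a \<Rightarrow> 'a)) = q ^ rk q h"
  unfolding rk_def by (rule sub_card[OF Lnq_range_sub[OF h]])

end



definition sp :: "nat \<Rightarrow> nat \<Rightarrow> (nat \<Rightarrow> 'a::field) \<Rightarrow> nat \<Rightarrow> 'a \<Rightarrow> 'a" where
  "sp q t a k x = (\<Sum>i\<le>k. a i * x ^ (q ^ (t * i)))"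

lemma sp_Suc: "sp q t a (Suc k) x = sp q t a k x + a (Suc k) * x ^ (q ^ (t * Suc k))"
  by (simp add: sp_def)

lemma sp_0: "sp q t a 0 x = a 0 * x"
  by (simp add: sp_def)

lemma sp_cong: "(\<And>i. i \<le> k \<Longrightarrow> a i = b i) \<Longrightarrow> sp q t a k x = sp q t b k x"
  by (simp add: sp_def)

lemma card_fibers:
  fixes L :: "'a::{ab_group_add,finite} \<Rightarrow> 'a"
  assumes add: "\<And>x y. L (x + y) = L x + L y" and AB: "L ` A \<subseteq> B"
  shows "card A \<le> card {x. L x = 0} * card B"
proof -
  interpret additive L by standard (rule add)
  have fib: "card {x\<in>A. L x = y} \<le> card {x. L x = 0}" for y
  proof (cases "\<exists>x0. L x0 = y")
    case True
    then obtain x0 where y: "y = L x0" by auto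
    have "{x\<in>A. L x = y} \<subseteq> (\<lambda>z. z + x0) ` {x. L x = 0}"
    proof
      fix x assume "x \<in> {x\<in>A. L x = y}"
      hence "L (x - x0) = 0" using y by (simp add: diff)
      thus "x \<in> (\<lambda>z. z + x0) ` {x. L x = 0}" by (intro image_eqI[of _ _ "x - x0"]) auto
    qed
    hence "card {x\<in>A. L x = y} \<le> card ((\<lambda>z. z + x0) ` {x. L x = 0})" by (intro card_mono) auto
    also have "\<dots> \<le> card {x. L x = 0}" by (rule card_image_le) simp
    finally show ?thesis .
  next
    case False
    hence e: "{x\<in>A. L x = y} = {}" by auto
    show ?thesis unfolding e by simp
  qed
  have "A \<subseteq> (\<Union>y\<in>B. {x\<in>A. L x = y})" using AB by auto
  hence "card A \<le> card (\<Union>y\<in>B. {x\<in>A. L x = y})" by (intro card_mono) auto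
  also have "\<dots> \<le> (\<Sum>y\<in>B. card {x\<in>A. L x = y})" by (rule card_UN_le) simp
  also have "\<dots> \<le> (\<Sum>y\<in>B. card {x. L x = 0})" by (intro sum_mono fib)
  finally show ?thesis by (simp add: mult.commute)
qed

context
  fixes q n :: nat
  assumes qpp: "prime_power q" and npos: "n > 0"
    and cardq: "card (UNIV :: 'a::{field,finite} set) = q ^ n"
begin

lemma sp_zero: "sp q t a k (0::'a) = 0"
  using q_ge2[OF qpp npos cardq] by (simp add: sp_def power_0_left)

lemma sp_add: "sp q t a k ((x::'a) + y) = sp q t a k x + sp q t a k y"
  unfolding sp_def by (simp add: frob_add[OF qpp npos cardq] distrib_left sum.distrib)

lemma sp_div:
  "\<exists>b. (\<forall>x::'a. sp q t a (Suc k) x = sp q t b k (x ^ (q ^ t) - c * x) + (a 0 + b 0 * c) * x)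
        \<and> b k = a (Suc k)"
proof (induction k arbitrary: a)
  case 0
  show ?case
    by (intro exI[of _ "\<lambda>_. a 1"]) (simp add: sp_def algebra_simps)
next
  case (Suc k)
  define a' where "a' = a(Suc k := a (Suc k) + a (Suc (Suc k)) * c ^ (q ^ (t * Suc k)))"
  obtain b' where b': "\<And>x::'a. sp q t a' (Suc k) x = sp q t b' k (x ^ (q ^ t) - c * x) + (a' 0 + b' 0 * c) * x"
    "b' k = a' (Suc k)"
    using Suc.IH[of a'] by blast
  define b where "b = b'(Suc k := a (Suc (Suc k)))"
  have pw: "(x ^ (q ^ t)) ^ (q ^ (t * Suc k)) = x ^ (q ^ (t * Suc (Suc k)))" for x :: 'a
  proof -
    have "(x ^ (q ^ t)) ^ (q ^ (t * Suc k)) = x ^ (q ^ t * q ^ (t * Suc k))" by (rule power_mult[symmetric])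
    also have "q ^ t * q ^ (t * Suc k) = q ^ (t * Suc (Suc k))" by (simp add: power_add[symmetric])
    finally show ?thesis .
  qed
  have key: "sp q t a (Suc (Suc k)) x = sp q t a' (Suc k) x
      + a (Suc (Suc k)) * (x ^ (q ^ t) - c * x) ^ (q ^ (t * Suc k))" for x :: 'a
  proof -
    have "sp q t a' k x = sp q t a k x" by (rule sp_cong) (simp add: a'_def)
    hence "sp q t a' (Suc k) x = sp q t a k x + a' (Suc k) * x ^ (q ^ (t * Suc k))"
      by (simp add: sp_Suc)
    moreover have "(x ^ (q ^ t) - c * x) ^ (q ^ (t * Suc k))
        = x ^ (q ^ (t * Suc (Suc k))) - c ^ (q ^ (t * Suc k)) * x ^ (q ^ (t * Suc k))"
      by (simp only: frob_diff[OF qpp npos cardq] power_mult_distrib pw)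
    ultimately show ?thesis by (simp add: sp_Suc a'_def algebra_simps) (metis distrib_left)
  qed
  have "sp q t a (Suc (Suc k)) x = sp q t b (Suc k) (x ^ (q ^ t) - c * x) + (a 0 + b 0 * c) * x" for x :: 'a
  proof -
    have "sp q t b (Suc k) y = sp q t b' k y + a (Suc (Suc k)) * y ^ (q ^ (t * Suc k))" for y :: 'a
    proof -
      have "sp q t b k y = sp q t b' k y" by (rule sp_cong) (simp add: b_def)
      thus ?thesis by (simp add: sp_Suc b_def)
    qed
    moreover have "a' 0 = a 0" "b 0 = b' 0" by (simp_all add: a'_def b_def)
    ultimately show ?thesis using key[of x] b'(1)[of x] by (simp add: algebra_simps)
  qed
  moreover have "b (Suc k) = a (Suc (Suc k))" by (simp add: b_def)
  ultimately show ?case by blast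
qed

lemma N_mult: "normq q n ((x::'a) * y) = normq q n x * normq q n y"
  by (simp add: normq_def power_mult_distrib prod.distrib)

lemma N_pow: "normq q n ((x::'a) ^ m) = normq q n x ^ m"
  by (simp add: normq_def prod_power_distrib power_mult[symmetric] mult.commute)

lemma N_q: "normq q n (x::'a) ^ q = normq q n x"
proof (cases "x = 0")
  case True
  have "normq q n (0::'a) = 0" unfolding normq_def using npos q_ge2[OF qpp npos cardq] by (simp add: power_0_left)
  thus ?thesis using True q_ge2[OF qpp npos cardq] by simp
next
  case False
  define A where "A = (\<Prod>i<n. x ^ (q ^ Suc i))"
  have e1: "normq q n x ^ q = A"
    by (simp add: A_def normq_def prod_power_distrib power_mult[symmetric] mult.commute)
  have e2: "A * x = (\<Prod>i<Suc n. x ^ (q ^ i))"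
    unfolding A_def by (subst prod.lessThan_Suc_shift) (simp add: mult.commute)
  have e3: "(\<Prod>i<Suc n. x ^ (q ^ i)) = normq q n x * x"
    using frob_n[OF qpp npos cardq, of x] by (simp add: normq_def)
  have "normq q n x ^ q * x = normq q n x * x" by (simp only: e1 e2 e3)
  thus ?thesis using False by simp
qed

lemma N_frob: "normq q n ((x::'a) ^ (q ^ j)) = normq q n x"
proof -
  have "normq q n x ^ (q ^ j) = normq q n x"
  proof (induction j)
    case (Suc j)
    have "normq q n x ^ (q ^ Suc j) = (normq q n x ^ (q ^ j)) ^ q"
      by (simp add: power_mult[symmetric] mult.commute)
    thus ?case using Suc N_q by simp
  qed simp
  thus ?thesis by (simp add: N_pow)
qed

lemma N_neg1: "normq q n (- 1 :: 'a) = (- 1) ^ n"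
proof -
  have "(- 1 :: 'a) ^ (q ^ i) = - 1" for i
    using frob_neg[OF qpp npos cardq, of 1 i] by simp
  thus ?thesis by (simp add: normq_def)
qed

lemma N_nz: "(x::'a) \<noteq> 0 \<Longrightarrow> normq q n x \<noteq> 0"
  by (simp add: normq_def)

lemma N_ratio:
  assumes "(u::'a) \<noteq> 0" "c * u = u ^ (q ^ t)"
  shows "normq q n c = 1"
proof -
  have "normq q n c * normq q n u = normq q n u"
    using N_mult[of c u] assms(2) N_frob[of u t] by simp
  thus ?thesis using N_nz[OF assms(1)] by simp
qed

end



context
  fixes q n :: nat
  assumes qpp: "prime_power q" and npos: "n > 0"
    and cardq: "card (UNIV :: 'a::{field,finite} set) = q ^ n"
begin

lemma kernel_bound:
  assumes cop: "coprime t n"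
  shows "a k \<noteq> 0 \<Longrightarrow> card {x::'a. sp q t a k x = 0} \<le> q ^ k \<and>
    (card {x::'a. sp q t a k x = 0} = q ^ k \<longrightarrow> normq q n (a 0) = (- 1) ^ (n * k) * normq q n (a k))"
proof (induction k arbitrary: a)
  case 0
  have "{x::'a. sp q t a 0 x = 0} = {0}" using 0 by (auto simp: sp_0)
  thus ?case by simp
next
  case (Suc k)
  have q2: "q \<ge> 2" using q_ge2[OF qpp npos cardq] .
  let ?K = "{x::'a. sp q t a (Suc k) x = 0}"
  show ?case
  proof (cases "\<exists>u::'a. u \<noteq> 0 \<and> sp q t a (Suc k) u = 0")
    case False
    hence "?K \<subseteq> {0}" by auto
    hence "card ?K \<le> 1" using card_mono[of "{0}" ?K] by simp
    moreover have "1 < q ^ Suc k" using q2 one_less_power[of q "Suc k"] by linarith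
    ultimately show ?thesis by simp
  next
    case True
    then obtain u :: 'a where u: "u \<noteq> 0" "sp q t a (Suc k) u = 0" by blast
    define c where "c = u ^ (q ^ t) / u"
    have cu: "c * u = u ^ (q ^ t)" using u by (simp add: c_def)
    have c0: "c \<noteq> 0" using u q2 by (simp add: c_def)
    obtain b where b: "\<And>x::'a. sp q t a (Suc k) x = sp q t b k (x ^ (q ^ t) - c * x) + (a 0 + b 0 * c) * x"
      "b k = a (Suc k)"
      using sp_div[OF qpp npos cardq, of t a k c] by blast
    define L where "L x = x ^ (q ^ t) - c * x" for x :: 'a
    have Lu: "L u = 0" using cu by (simp add: L_def)
    have "0 = sp q t b k (L u) + (a 0 + b 0 * c) * u" using b(1)[of u] u(2) by (simp add: L_def)
    hence "(a 0 + b 0 * c) * u = 0" using Lu sp_zero[OF qpp npos cardq] by simp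
    hence r0: "a 0 + b 0 * c = 0" using u(1) by simp
    have fL: "sp q t a (Suc k) x = sp q t b k (L x)" for x
      using b(1)[of x] r0 by (simp add: L_def)
    have Ladd: "L (x + y) = L x + L y" for x y
      by (simp add: L_def frob_add[OF qpp npos cardq] algebra_simps)
    have "{x. L x = 0} \<subseteq> (\<lambda>y. y * u) ` Fq q"
    proof
      fix x assume "x \<in> {x. L x = 0}"
      hence xq: "x ^ (q ^ t) = c * x" by (simp add: L_def)
      have "(x / u) ^ (q ^ t) = x / u"
        using c0 by (simp add: power_divide xq cu[symmetric])
      hence "(x / u) ^ q = x / u" by (rule frob_fix[OF qpp npos cardq cop])
      hence "x / u \<in> Fq q" by (simp add: Fq_def)
      thus "x \<in> (\<lambda>y. y * u) ` Fq q" using u(1) by (intro image_eqI[of _ _ "x / u"]) auto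
    qed
    hence "card {x. L x = 0} \<le> card ((\<lambda>y. y * u) ` (Fq q :: 'a set))" by (intro card_mono) auto
    also have "\<dots> \<le> card (Fq q :: 'a set)" by (rule card_image_le) simp
    finally have kerL: "card {x. L x = 0} \<le> q" using Fq_card[OF qpp npos cardq] by simp
    let ?G = "{y::'a. sp q t b k y = 0}"
    have sub: "L ` ?K \<subseteq> ?G" using fL by auto
    have fib: "card ?K \<le> card {x. L x = 0} * card ?G" by (rule card_fibers[OF Ladd sub])
    have bk: "b k \<noteq> 0" using b(2) Suc.prems by simp
    have IH: "card ?G \<le> q ^ k"
      "card ?G = q ^ k \<Longrightarrow> normq q n (b 0) = (- 1) ^ (n * k) * normq q n (b k)"
      using Suc.IH[of b] bk by auto
    have le: "card ?K \<le> q * card ?G" using fib kerL by (meson le_trans mult_le_mono1)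
    have m: "q * card ?G \<le> q * q ^ k" using IH(1) by (rule mult_le_mono2)
    have "card ?K \<le> q ^ Suc k" using le_trans[OF le m] by (simp only: power_Suc)
    moreover have "normq q n (a 0) = (- 1) ^ (n * Suc k) * normq q n (a (Suc k))"
      if eq: "card ?K = q ^ Suc k"
    proof -
      have "q * q ^ k \<le> q * card ?G" using le eq by simp
      hence "q ^ k \<le> card ?G" using q2 by simp
      hence "card ?G = q ^ k" using IH(1) by simp
      hence Nb: "normq q n (b 0) = (- 1) ^ (n * k) * normq q n (a (Suc k))" using IH(2) b(2) by simp
      have a0: "a 0 = (- 1) * (b 0 * c)" using r0 by (simp add: eq_neg_iff_add_eq_0)
      have Nc: "normq q n c = 1" by (rule N_ratio[OF qpp npos cardq u(1) cu])
      have "normq q n (a 0) = normq q n (- 1) * (normq q n (b 0) * normq q n c)"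
        unfolding a0 by (simp only: N_mult[OF qpp npos cardq])
      also have "\<dots> = (- 1) ^ n * ((- 1) ^ (n * k) * normq q n (a (Suc k)))"
        by (simp add: N_neg1[OF qpp npos cardq] Nb Nc)
      also have "\<dots> = (- 1) ^ (n * Suc k) * normq q n (a (Suc k))"
        by (simp add: power_add)
      finally show ?thesis .
    qed
    ultimately show ?thesis by blast
  qed
qed

lemma sp_trunc:
  assumes "j \<le> k" "\<And>i. j < i \<Longrightarrow> i \<le> k \<Longrightarrow> a i = 0"
  shows "sp q t a k x = sp q t a j x"
  using assms
proof (induction k)
  case 0
  thus ?case by simp
next
  case (Suc k)
  show ?case
  proof (cases "j = Suc k")
    case False
    hence "j \<le> k" using Suc.prems by simp
    thus ?thesis using Suc.IH Suc.prems by (simp add: sp_Suc)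
  qed simp
qed

lemma kernel_nz:
  assumes cop: "coprime t n" and nz: "\<exists>i\<le>k. a i \<noteq> 0"
  shows "\<exists>j\<le>k. a j \<noteq> 0 \<and> (\<forall>x. sp q t a k x = sp q t a j x) \<and> (\<forall>i. j < i \<and> i \<le> k \<longrightarrow> a i = 0)
     \<and> card {x::'a. sp q t a k x = 0} \<le> q ^ j"
proof -
  define j where "j = Max {i. i \<le> k \<and> a i \<noteq> 0}"
  have fin: "finite {i. i \<le> k \<and> a i \<noteq> 0}" by simp
  have ne: "{i. i \<le> k \<and> a i \<noteq> 0} \<noteq> {}" using nz by auto
  have j: "j \<le> k" "a j \<noteq> 0" using Max_in[OF fin ne] by (auto simp: j_def)
  have above: "a i = 0" if ji: "j < i" "i \<le> k" for i
  proof (rule ccontr)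
    assume "a i \<noteq> 0"
    hence "i \<le> j" using Max_ge[OF fin, of i] ji unfolding j_def by blast
    thus False using ji by simp
  qed
  have tr: "sp q t a k x = sp q t a j x" for x :: 'a by (rule sp_trunc[OF j(1) above])
  have "card {x::'a. sp q t a j x = 0} \<le> q ^ j" using kernel_bound[OF cop, of a j] j(2) by blast
  thus ?thesis using j tr above by (intro exI[of _ j]) auto
qed

end



lemma sum_fun_apply: "(\<Sum>i\<in>A. f i) x = (\<Sum>i\<in>A. (f i :: 'a \<Rightarrow> 'b::comm_monoid_add) x)"
  by (induction A rule: infinite_finite_induct) auto

lemma vs_scl: "vector_space (scl :: 'a::field \<Rightarrow> ('a \<Rightarrow> 'a) \<Rightarrow> ('a \<Rightarrow> 'a))"
  by unfold_locales (auto simp: scl_def fun_eq_iff algebra_simps)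

lemma module_scl: "module (scl :: 'a::field \<Rightarrow> ('a \<Rightarrow> 'a) \<Rightarrow> ('a \<Rightarrow> 'a))"
  using vs_scl by (simp add: module_iff_vector_space)

lemma card_span_indep:
  fixes B :: "('a::{field,finite} \<Rightarrow> 'a) set"
  assumes ind: "\<not> module.dependent scl B"
  shows "card (module.span scl B) = card (UNIV :: 'a set) ^ card B"
proof -
  interpret V: vector_space "scl :: 'a \<Rightarrow> ('a \<Rightarrow> 'a) \<Rightarrow> ('a \<Rightarrow> 'a)" by (rule vs_scl)
  have fB: "finite B" by simp
  have eq: "V.span B = (\<lambda>u. \<Sum>v\<in>B. scl (u v) v) ` (PiE B (\<lambda>_. UNIV))"
  proof -
    have "V.span B = range (\<lambda>u. \<Sum>v\<in>B. scl (u v) v)" by (rule V.span_finite[OF fB])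
    also have "\<dots> = (\<lambda>u. \<Sum>v\<in>B. scl (u v) v) ` (PiE B (\<lambda>_. UNIV))"
    proof (intro equalityI subsetI)
      fix x assume "x \<in> range (\<lambda>u. \<Sum>v\<in>B. scl (u v) v)"
      then obtain u where "x = (\<Sum>v\<in>B. scl (u v) v)" by blast
      thus "x \<in> (\<lambda>u. \<Sum>v\<in>B. scl (u v) v) ` (PiE B (\<lambda>_. UNIV))"
        by (intro image_eqI[of _ _ "restrict u B"]) (auto intro!: sum.cong)
    qed auto
    finally show ?thesis .
  qed
  have inj: "inj_on (\<lambda>u. \<Sum>v\<in>B. scl (u v) v) (PiE B (\<lambda>_. UNIV))"
  proof (rule inj_onI)
    fix u w assume u: "u \<in> PiE B (\<lambda>_. UNIV)" and w: "w \<in> PiE B (\<lambda>_. UNIV)"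
      and uw: "(\<Sum>v\<in>B. scl (u v) v) = (\<Sum>v\<in>B. scl (w v) v)"
    have "(\<Sum>v\<in>B. scl (u v - w v) v) = 0"
      using uw by (simp add: V.scale_left_diff_distrib sum_subtractf)
    hence "\<forall>v\<in>B. u v - w v = 0"
      using V.independentD[OF ind fB subset_refl, of "\<lambda>v. u v - w v"] by blast
    thus "u = w" using u w by (intro PiE_ext) auto
  qed
  show ?thesis unfolding eq using fB by (simp add: card_image[OF inj] card_PiE)
qed

context
  fixes q n :: nat
  assumes qpp: "prime_power q" and npos: "n > 0"
    and cardq: "card (UNIV :: 'a::{field,finite} set) = q ^ n"
begin

lemma small_rank_exists:
  fixes C :: "('a \<Rightarrow> 'a) set"
  assumes CL: "C \<subseteq> Lnq q" and Csub: "module.subspace scl C" and m: "m \<le> n"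
    and big: "q ^ (n * m) < card C"
  shows "\<exists>h\<in>C. h \<noteq> 0 \<and> rk q h \<le> n - m"
proof -
  have q2: "q \<ge> 2" using q_ge2[OF qpp npos cardq] .
  obtain B :: "'a set" where B: "finite B" "card B = m" "Fq_indep q B"
    using exists_indep[OF qpp npos cardq m] by blast
  have "\<not> inj_on (\<lambda>h. restrict h B) C"
  proof
    assume inj: "inj_on (\<lambda>h. restrict h B) C"
    have "card C \<le> card (PiE B (\<lambda>_. UNIV :: 'a set))"
      by (rule card_inj_on_le[OF inj]) (auto intro: finite_PiE B(1))
    also have "\<dots> = q ^ (n * m)" using B cardq by (simp add: card_PiE power_mult)
    finally show False using big by simp
  qed
  then obtain h1 h2 where h12: "h1 \<in> C" "h2 \<in> C" "h1 \<noteq> h2" "restrict h1 B = restrict h2 B"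
    unfolding inj_on_def by blast
  define h where "h = h1 - h2"
  have hC: "h \<in> C" unfolding h_def by (rule module.subspace_diff[OF module_scl Csub h12(1,2)])
  have h0: "h \<noteq> 0" using h12(3) by (simp add: h_def)
  have hL: "h \<in> Lnq q" using hC CL by blast
  have hB: "\<forall>b\<in>B. h b = 0"
  proof
    fix b assume "b \<in> B"
    hence "restrict h1 B b = restrict h2 B b" using h12(4) by simp
    thus "h b = 0" using \<open>b \<in> B\<close> by (simp add: h_def)
  qed
  have "Fq_span q B \<subseteq> {x. h x = 0}"
    using Lnq_vanish[OF qpp npos cardq hL B(1) hB] by blast
  hence "card (Fq_span q B) \<le> card {x. h x = 0}" by (intro card_mono) auto
  hence ker: "q ^ m \<le> card {x. h x = 0}" using indep_card[OF qpp npos cardq B(1,3)] B(2) by simp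
  have "q ^ rk q h * card {x. h x = 0} = q ^ n"
    using Lnq_rank_nullity[OF qpp npos cardq hL] Lnq_card_range[OF qpp npos cardq hL] by simp
  hence "q ^ rk q h * q ^ m \<le> q ^ n" using ker by (metis mult_le_mono2)
  hence "q ^ (rk q h + m) \<le> q ^ n" by (simp add: power_add)
  hence "rk q h + m \<le> n" using q2 by (simp add: power_le_imp_le_exp)
  thus ?thesis using hC h0 by (intro bexI[of _ h]) auto
qed

lemma Lnq_sp: "sp q t (a :: nat \<Rightarrow> 'a) k \<in> Lnq q"
proof -
  have add: "sp q t a k (x + y) = sp q t a k x + sp q t a k y" for x y :: 'a
    by (rule sp_add[OF qpp npos cardq])
  have hom: "sp q t a k (c * x) = c * sp q t a k x" if c: "c \<in> Fq q" for c x :: 'a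
  proof -
    have cp: "c ^ (q ^ (t * i)) = c" for i
      using frob_iter[OF qpp npos cardq, of c 1 "t * i"] c by (simp add: Fq_def)
    show ?thesis unfolding sp_def by (simp only: power_mult_distrib cp) (simp add: sum_distrib_left algebra_simps)
  qed
  show ?thesis unfolding Lnq_def using add hom by blast
qed

lemma xq_eq:
  assumes t: "t = nat (s mod int n)"
  shows "xq q n (s * int i) (x::'a) = x ^ (q ^ (t * i))"
proof -
  have st: "s mod int n = int t" using t npos by simp
  have "(s * int i) mod int n = (s mod int n * int i) mod int n" by (simp add: mod_mult_left_eq)
  also have "\<dots> = int ((t * i) mod n)" by (simp add: st of_nat_mod)
  finally have "nat ((s * int i) mod int n) = (t * i) mod n" by simp
  thus ?thesis unfolding xq_def using frob_mod[OF qpp npos cardq, of x "t * i"] by simp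
qed

end



theorem theorem3p10:
  fixes C :: "('a::{field,finite} \<Rightarrow> 'a) set"
    and q n k :: nat and s :: int and p r :: "'a \<Rightarrow> 'a" and \<eta> :: 'a
  assumes q: "prime_power q" and n: "n > 0" and card: "card (UNIV :: 'a set) = q ^ n"
    and C_L: "C \<subseteq> Lnq q" and C_sub: "module.subspace scl C"
    and C_dim: "dim_L C = k" and k: "k > 2"
    and C_U1: "C \<inter> U1 q = {0}"
    and s: "gcd s (int n) = 1"
    and dim1: "dim_L (C \<inter> twist_code q n s C) = k - 2"
    and dim2: "dim_L (C \<inter> twist_code q n s C \<inter> twist_code q n (2 * s) C) = k - 3"
    and p_L: "p \<in> Lnq q" and r_L: "r \<in> Lnq q" and r_C: "r \<in> C"
    and decomp: "C = {a + b | a b. a \<in> span_L {twist q n (s * int i) p | i. 1 \<le> i \<and> i \<le> k - 1} \<and> b \<in> span_L {r}}"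
    and direct: "span_L {twist q n (s * int i) p | i. 1 \<le> i \<and> i \<le> k - 1} \<inter> span_L {r} = {0}"
    and p_inv: "bij p"
    and eta: "\<eta> \<noteq> 0" and eta_C: "p + scl \<eta> (twist q n (s * int k) p) \<in> C"
    and eta_norm: "normq q n \<eta> \<noteq> (-1) ^ (k * n)"
  shows "MRD q n C \<and> equivalent_codes q C (H_code q n k s \<eta>)"
proof -
  interpret V: vector_space "scl :: 'a \<Rightarrow> ('a \<Rightarrow> 'a) \<Rightarrow> ('a \<Rightarrow> 'a)" by (rule vs_scl)
  have q2: "q \<ge> 2" using q_ge2[OF q n card] .
  define t where "t = nat (s mod int n)"
  have cop: "coprime t n"
  proof -
    have st: "s mod int n = int t" using n by (simp add: t_def)
    have "gcd (s mod int n) (int n) = 1" using s by (metis gcd.commute gcd_red_int)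
    hence "gcd (int t) (int n) = 1" using st by simp
    hence "gcd t n = 1" by (metis gcd_int_int_eq of_nat_eq_1_iff)
    thus ?thesis by (simp add: coprime_iff_gcd_eq_1)
  qed
  have xq: "xq q n (s * int i) x = x ^ (q ^ (t * i))" for i and x :: 'a
    by (rule xq_eq[OF q n card t_def])
  have finC: "finite C" by simp

  obtain B where B: "B \<subseteq> C" "V.independent B" "C \<subseteq> V.span B" "card B = V.dim C"
    by (rule V.basis_exists)
  have "V.span B = C" using V.span_subspace[OF B(1) B(3) C_sub] .
  hence cardC: "card C = q ^ (n * k)"
    using card_span_indep[OF B(2)] B(4) C_dim card by (simp add: power_mult)

  have kn: "k < n"
  proof (rule ccontr)
    assume "\<not> k < n"
    hence "n * (n - 1) < n * k" using n by simp
    hence "q ^ (n * (n - 1)) < card C" using cardC q2 by (simp add: power_strict_increasing_iff)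
    then obtain h where h: "h \<in> C" "h \<noteq> 0" "rk q h \<le> n - (n - 1)"
      using small_rank_exists[OF q n card C_L C_sub, of "n - 1"] by auto
    hence "h \<in> U1 q" using C_L n by (auto simp: U1_def)
    thus False using h C_U1 by blast
  qed

  define ext where "ext a = (\<lambda>i. if i = k then \<eta> * a 0 else a i)" for a :: "nat \<Rightarrow> 'a"
  define hf where "hf a = sp q t (ext a) k" for a
  define g0 where "g0 = (\<lambda>x::'a. x + \<eta> * xq q n (s * int k) x)"
  define G where "G = insert g0 {xq q n (s * int i) | i. 1 \<le> i \<and> i \<le> k - 1}"
  have H_eq: "H_code q n k s \<eta> = V.span G" by (simp add: H_code_def G_def g0_def)
  have kset: "{..k} = insert 0 (insert k {1..<k})" using k by auto
  have hf_split: "hf a x = a 0 * g0 x + (\<Sum>i\<in>{1..<k}. a i * xq q n (s * int i) x)" for a x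
  proof -
    have "hf a x = (\<Sum>i\<in>insert 0 (insert k {1..<k}). ext a i * x ^ (q ^ (t * i)))"
      unfolding hf_def sp_def kset ..
    also have "\<dots> = ext a 0 * x + (ext a k * x ^ (q ^ (t * k)) + (\<Sum>i\<in>{1..<k}. ext a i * x ^ (q ^ (t * i))))"
      using k by (simp add: sum.insert)
    also have "(\<Sum>i\<in>{1..<k}. ext a i * x ^ (q ^ (t * i))) = (\<Sum>i\<in>{1..<k}. a i * xq q n (s * int i) x)"
      by (intro sum.cong) (auto simp: ext_def xq)
    finally show ?thesis using k by (simp add: ext_def g0_def xq algebra_simps)
  qed
  have hf_fun: "hf a = scl (a 0) g0 + (\<Sum>i\<in>{1..<k}. scl (a i) (xq q n (s * int i)))" for a
    by (rule ext) (simp add: hf_split scl_def sum_fun_apply)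
  have g0G: "g0 \<in> G" by (simp add: G_def)
  have xqG: "xq q n (s * int i) \<in> G" if "i \<in> {1..<k}" for i
    using that unfolding G_def by auto
  have hf_in: "hf a \<in> V.span G" for a
    unfolding hf_fun
    by (intro V.span_add V.span_scale V.span_sum V.span_base g0G xqG)
  have hf_add: "hf (\<lambda>i. a i + b i) = hf a + hf b" for a b
    by (rule ext) (simp add: hf_split algebra_simps sum.distrib)
  have hf_scale: "hf (\<lambda>i. c * a i) = scl c (hf a)" for c a
    by (rule ext) (simp add: hf_split scl_def algebra_simps sum_distrib_left)
  have hf_diff: "hf (\<lambda>i. a i - b i) = hf a - hf b" for a b
    by (rule ext) (simp add: hf_split algebra_simps sum_subtractf)
  have range_sub: "V.subspace (range hf)"
  proof (rule V.subspaceI)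
    have "hf (\<lambda>_. 0) = 0" by (rule ext) (simp add: hf_split)
    thus "0 \<in> range hf" by (metis rangeI)
  next
    fix x y assume "x \<in> range hf" "y \<in> range hf"
    then obtain a b where "x = hf a" "y = hf b" by blast
    thus "x + y \<in> range hf" using hf_add[of a b] by (metis rangeI)
  next
    fix c x assume "x \<in> range hf"
    then obtain a where "x = hf a" by blast
    thus "scl c x \<in> range hf" using hf_scale[of c a] by (metis rangeI)
  qed
  have G_sub: "G \<subseteq> range hf"
  proof
    fix g assume "g \<in> G"
    then consider "g = g0" | i where "g = xq q n (s * int i)" "1 \<le> i" "i \<le> k - 1"
      unfolding G_def by blast
    thus "g \<in> range hf"
    proof cases
      case 1
      have "hf (\<lambda>i. if i = 0 then 1 else 0) = g0" by (rule ext) (simp add: hf_split)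
      thus ?thesis using 1 by (metis rangeI)
    next
      case (2 i)
      have iset: "i \<in> {1..<k}" using 2 k by auto
      have "hf (\<lambda>j. if j = i then 1 else 0) = xq q n (s * int i)"
        using 2 iset by (intro ext) (simp add: hf_split if_distrib[of "\<lambda>c. c * _"] sum.delta cong: if_cong)
      thus ?thesis using 2 by (metis rangeI)
    qed
  qed
  have H_range: "V.span G = range hf"
    using V.span_minimal[OF G_sub range_sub] hf_in by blast
  have hf_Lnq: "hf a \<in> Lnq q" for a unfolding hf_def by (rule Lnq_sp[OF q n card])

  have ker_small: "card {x. hf a x = 0} \<le> q ^ (k - 1)" if nz: "\<exists>i<k. a i \<noteq> 0" for a
  proof -
    have nz': "\<exists>i\<le>k. ext a i \<noteq> 0" using nz by (auto simp: ext_def)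
    obtain j where j: "j \<le> k" "ext a j \<noteq> 0" "\<forall>x. sp q t (ext a) k x = sp q t (ext a) j x"
      "card {x::'a. sp q t (ext a) k x = 0} \<le> q ^ j"
      using kernel_nz[OF q n card cop nz'] by blast
    show ?thesis
    proof (cases "j < k")
      case True
      hence "q ^ j \<le> q ^ (k - 1)" using q2 by (intro power_increasing) auto
      thus ?thesis using j(4) by (simp add: hf_def)
    next
      case False
      hence jk: "j = k" using j(1) by simp
      have a0: "a 0 \<noteq> 0" using j(2) jk by (simp add: ext_def)
      have ek: "ext a k \<noteq> 0" using j(2) jk by simp
      have kb: "card {x::'a. sp q t (ext a) k x = 0} \<le> q ^ k"
        "card {x::'a. sp q t (ext a) k x = 0} = q ^ k \<Longrightarrow>
          normq q n (ext a 0) = (- 1) ^ (n * k) * normq q n (ext a k)"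
        using kernel_bound[OF q n card cop, of "ext a" k] ek by auto
      have ne: "card {x::'a. sp q t (ext a) k x = 0} \<noteq> q ^ k"
      proof
        assume eq: "card {x::'a. sp q t (ext a) k x = 0} = q ^ k"
        have "normq q n (a 0) = (- 1) ^ (n * k) * (normq q n \<eta> * normq q n (a 0))"
          using kb(2)[OF eq] k by (simp add: ext_def N_mult[OF q n card])
        hence "1 = (- 1) ^ (n * k) * normq q n \<eta>"
          using N_nz[OF q n card a0] by (metis mult.assoc mult.commute mult_cancel_right1)
        hence e: "(- 1) ^ (n * k) * normq q n \<eta> = 1" by simp
        have mm: "(- 1) ^ (n * k) * (- 1) ^ (n * k) = (1::'a)"
          by (simp add: power_mult_distrib[symmetric])
        have "normq q n \<eta> = ((- 1) ^ (n * k) * (- 1) ^ (n * k)) * normq q n \<eta>" using mm by simp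
        also have "\<dots> = (- 1) ^ (n * k) * ((- 1) ^ (n * k) * normq q n \<eta>)" by (simp only: mult.assoc)
        also have "\<dots> = (- 1) ^ (n * k)" using e by simp
        finally have "normq q n \<eta> = (- 1) ^ (k * n)" by (simp only: mult.commute)
        thus False using eta_norm by simp
      qed
      have "FqSub q {x. hf a x = 0}" by (rule Lnq_ker_sub[OF q n card hf_Lnq])
      hence cd: "card {x. hf a x = 0} = q ^ Fq_dim q {x. hf a x = 0}" by (rule sub_card[OF q n card])
      have "card {x. hf a x = 0} < q ^ k" using kb(1) ne by (simp add: hf_def)
      hence "Fq_dim q {x. hf a x = 0} < k" using cd q2 by (simp add: power_strict_increasing_iff)
      hence "q ^ Fq_dim q {x. hf a x = 0} \<le> q ^ (k - 1)" using q2 by (intro power_increasing) auto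
      thus ?thesis using cd by simp
    qed
  qed
  have hf_zero: "\<forall>i<k. a i = 0" if z: "hf a = 0" for a
  proof (rule ccontr)
    assume "\<not> (\<forall>i<k. a i = 0)"
    hence "card {x. hf a x = 0} \<le> q ^ (k - 1)" using ker_small by blast
    moreover have "{x. hf a x = 0} = UNIV" using z by auto
    ultimately have "q ^ n \<le> q ^ (k - 1)" using card by simp
    hence "n \<le> k - 1" using q2 by (simp add: power_le_imp_le_exp)
    thus False using kn by simp
  qed
  have hf_restrict: "hf (restrict a {..<k}) = hf a" for a
    by (rule ext) (use k in \<open>simp add: hf_split\<close>)
  have hf_inj: "inj_on hf (PiE {..<k} (\<lambda>_. UNIV))"
  proof (rule inj_onI)
    fix a b assume a: "a \<in> PiE {..<k} (\<lambda>_. UNIV)" and b: "b \<in> PiE {..<k} (\<lambda>_. UNIV)"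
      and ab: "hf a = hf b"
    have "hf (\<lambda>i. a i - b i) = 0" using ab by (simp add: hf_diff)
    hence "\<forall>i<k. a i - b i = 0" by (rule hf_zero)
    thus "a = b" using a b by (intro PiE_ext) auto
  qed
  have range_img: "range hf = hf ` PiE {..<k} (\<lambda>_. UNIV)"
  proof (intro equalityI subsetI)
    fix h assume "h \<in> range hf"
    then obtain a where "h = hf a" by blast
    thus "h \<in> hf ` PiE {..<k} (\<lambda>_. UNIV)"
      by (intro image_eqI[of _ _ "restrict a {..<k}"]) (auto simp: hf_restrict)
  qed auto
  have cardH: "card (range hf) = q ^ (n * k)"
    unfolding range_img using card by (simp add: card_image[OF hf_inj] card_PiE power_mult)

  have T_in: "twist q n (s * int i) p \<in> C" if "i \<in> {1..<k}" for i
  proof -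
    have "twist q n (s * int i) p \<in> span_L {twist q n (s * int i) p | i. 1 \<le> i \<and> i \<le> k - 1}"
      using that by (intro V.span_base) auto
    moreover have "(0 :: 'a \<Rightarrow> 'a) \<in> span_L {r}" by (rule V.span_zero)
    ultimately have "twist q n (s * int i) p + 0 \<in> {a + b | a b. a \<in> span_L {twist q n (s * int i) p | i. 1 \<le> i \<and> i \<le> k - 1} \<and> b \<in> span_L {r}}"
      by blast
    thus ?thesis using decomp by simp
  qed
  have comp_in: "hf a \<circ> p \<in> C" for a
  proof -
    have "hf a \<circ> p = scl (a 0) (p + scl \<eta> (twist q n (s * int k) p))
        + (\<Sum>i\<in>{1..<k}. scl (a i) (twist q n (s * int i) p))"
      by (rule ext) (simp add: hf_split scl_def sum_fun_apply twist_def g0_def algebra_simps)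
    also have "\<dots> \<in> C"
      by (intro V.subspace_add[OF C_sub] V.subspace_scale[OF C_sub] V.subspace_sum[OF C_sub] eta_C T_in)
    finally show ?thesis .
  qed
  have surjp: "surj p" using p_inv by (simp add: bij_is_surj)
  have comp_inj: "inj_on (\<lambda>h. h \<circ> p) (range hf)"
  proof (rule inj_onI)
    fix h1 h2 :: "'a \<Rightarrow> 'a" assume "h1 \<circ> p = h2 \<circ> p"
    thus "h1 = h2" using surjp by (metis fun.map_comp surj_iff o_id)
  qed
  have C_eq: "(\<lambda>h. h \<circ> p) ` range hf = C"
  proof (rule card_subset_eq[OF finC])
    show "(\<lambda>h. h \<circ> p) ` range hf \<subseteq> C" using comp_in by auto
    show "card ((\<lambda>h. h \<circ> p) ` range hf) = card C"
      using card_image[OF comp_inj] cardH cardC by simp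
  qed

  have rk_lower: "n - k + 1 \<le> rk q f" if f: "f \<in> C" "f \<noteq> 0" for f
  proof -
    obtain a where fa: "f = hf a \<circ> p" using f(1) C_eq by auto
    have nz: "\<exists>i<k. a i \<noteq> 0"
    proof (rule ccontr)
      assume "\<not> (\<exists>i<k. a i \<noteq> 0)"
      hence "hf a = 0" using k by (intro ext) (auto simp: hf_split)
      thus False using f(2) fa by auto
    qed
    have "range f = hf a ` (range p)" unfolding fa by (rule image_comp[symmetric])
    hence "range f = range (hf a)" using surjp by simp
    hence rkf: "rk q f = rk q (hf a)" by (simp add: rk_def)
    have "q ^ rk q (hf a) * card {x. hf a x = 0} = q ^ n"
      using Lnq_rank_nullity[OF q n card hf_Lnq] Lnq_card_range[OF q n card hf_Lnq] by simp
    hence "q ^ n \<le> q ^ rk q (hf a) * q ^ (k - 1)" using ker_small[OF nz] by (metis mult_le_mono2)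
    hence "q ^ n \<le> q ^ (rk q (hf a) + (k - 1))" by (simp add: power_add)
    hence "n \<le> rk q (hf a) + (k - 1)" using q2 by (simp add: power_le_imp_le_exp)
    thus ?thesis using rkf k kn by arith
  qed
  obtain h0 where h0: "h0 \<in> C" "h0 \<noteq> 0" "rk q h0 \<le> n - (k - 1)"
  proof -
    have "n * (k - 1) < n * k" using n k by simp
    hence big: "q ^ (n * (k - 1)) < card C" using cardC q2 by (simp add: power_strict_increasing_iff)
    have "k - 1 \<le> n" using kn by simp
    hence "\<exists>h\<in>C. h \<noteq> 0 \<and> rk q h \<le> n - (k - 1)"
      using small_rank_exists[OF q n card C_L C_sub _ big] by blast
    thus ?thesis using that by blast
  qed
  have rk_h0: "rk q h0 = n - k + 1" using rk_lower[OF h0(1,2)] h0(3) kn k by simp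
  have md: "min_dist q C = n - k + 1"
    unfolding min_dist_def
  proof (rule Min_eqI)
    have "{rk q (f - g) |f g. f \<in> C \<and> g \<in> C \<and> f \<noteq> g} \<subseteq> (\<lambda>(f, g). rk q (f - g)) ` (C \<times> C)"
      by auto
    thus "finite {rk q (f - g) |f g. f \<in> C \<and> g \<in> C \<and> f \<noteq> g}" by (rule finite_subset) simp
  next
    fix y assume "y \<in> {rk q (f - g) |f g. f \<in> C \<and> g \<in> C \<and> f \<noteq> g}"
    then obtain f g where fg: "y = rk q (f - g)" "f \<in> C" "g \<in> C" "f \<noteq> g" by blast
    have "f - g \<in> C" by (rule V.subspace_diff[OF C_sub fg(2,3)])
    moreover have "f - g \<noteq> 0" using fg(4) by simp
    ultimately show "n - k + 1 \<le> y" using rk_lower fg(1) by blast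
  next
    have "0 \<in> C" by (rule V.subspace_0[OF C_sub])
    thus "n - k + 1 \<in> {rk q (f - g) |f g. f \<in> C \<and> g \<in> C \<and> f \<noteq> g}"
      using h0 rk_h0 by (intro CollectI exI[of _ h0] exI[of _ 0]) auto
  qed
  have ee: "n - (n - k + 1) + 1 = k" using kn k by arith
  have MRD: "MRD q n C" by (simp only: MRD_def md cardC ee)

  have id_L: "id \<in> Lnq q" by (simp add: Lnq_def)
  have invp_L: "inv p \<in> Lnq q"
  proof -
    have padd: "p (x + y) = p x + p y" for x y using p_L by (simp add: Lnq_def)
    have phom: "c \<in> Fq q \<Longrightarrow> p (c * x) = c * p x" for c x using p_L by (simp add: Lnq_def)
    have pinv: "p (inv p y) = y" for y using surjp by (simp add: surj_f_inv_f)
    have injp: "inj p" using p_inv by (simp add: bij_is_inj)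
    have "inv p (x + y) = inv p x + inv p y" for x y
      using injp by (rule injD) (simp add: padd pinv)
    moreover have "inv p (c * x) = c * inv p x" if "c \<in> Fq q" for c x
      using injp by (rule injD) (simp add: phom[OF that] pinv)
    ultimately show ?thesis by (simp add: Lnq_def)
  qed
  have bij_inv: "bij (inv p)" by (rule bij_imp_bij_inv[OF p_inv])
  have aut: "field_aut (id :: 'a \<Rightarrow> 'a)" by (simp add: field_aut_def)
  have img: "(\<lambda>f. id \<circ> coeff_aut id f \<circ> inv p) ` C = H_code q n k s \<eta>"
  proof -
    have "(\<lambda>f. id \<circ> coeff_aut id f \<circ> inv p) ` C = (\<lambda>f. f \<circ> inv p) ` C"
      by (simp add: coeff_aut_def)
    also have "\<dots> = (\<lambda>h. h \<circ> p \<circ> inv p) ` range hf" unfolding C_eq[symmetric] by (simp add: image_image)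
    also have "\<dots> = range hf"
    proof -
      have "h \<circ> p \<circ> inv p = h" for h :: "'a \<Rightarrow> 'a"
      proof -
        have "p \<circ> inv p = id" using surjp surj_iff by blast
        thus ?thesis by (simp add: o_assoc[symmetric])
      qed
      thus ?thesis by simp
    qed
    finally show ?thesis using H_eq H_range by simp
  qed
  have "equivalent_codes q C (H_code q n k s \<eta>)"
    unfolding equivalent_codes_def using id_L invp_L bij_inv aut img by (intro exI[of _ id] exI[of _ "inv p"] exI[of _ id]) auto
  thus ?thesis using MRD by simp
qed


end
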